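(* Let $D$ be a division ring with infinite center $F$, let $n\geq 3$ be an integer, and let $p\in F[x]$ be a nonconstant polynomial. Then every matrix in $\mathrm{M}_n(D)$ can be expressed as a product of three elements of $p[\mathrm{M}_n(D),\mathrm{M}_n(D)]=\{p(AB)-p(BA)\mid A,B\in\mathrm{M}_n(D)\}$. *)

theory Defs
  imports "HOL-Computational_Algebra.Polynomial" "Jordan_Normal_Form.Matrix"
begin

definition ring_center :: "'a::ring set" where
  "ring_center = {z. \<forall>x. z * x = x * z}"

definition poly_mat :: "'a::ring_1 poly \<Rightarrow> 'a mat \<Rightarrow> 'a mat" where
  "poly_mat p A = mat (dim_row A) (dim_col A)
     (\<lambda>(i,j). \<Sum>k\<le>degree p. coeff p k * (A ^\<^sub>m k) $$ (i,j))"

definition poly_commutators :: "'a::ring_1 poly \<Rightarrow> nat \<Rightarrow> 'a mat set" where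
  "poly_commutators p n =
     {poly_mat p (A * B) - poly_mat p (B * A) | A B. A \<in> carrier_mat n n \<and> B \<in> carrier_mat n n}"

end

theory Submission
  imports Defs "HOL-Combinatorics.Permutations" "HOL-Combinatorics.Cycles"
begin

lemma center_0[simp]: "(0::'a::ring_1) \<in> ring_center" and center_1[simp]: "(1::'a::ring_1) \<in> ring_center"
  by (auto simp: ring_center_def)

lemma center_add[simp]: "(a::'a::ring_1) \<in> ring_center \<Longrightarrow> b \<in> ring_center \<Longrightarrow> a + b \<in> ring_center"
  by (auto simp: ring_center_def algebra_simps)
lemma center_uminus[simp]: "(a::'a::ring_1) \<in> ring_center \<Longrightarrow> - a \<in> ring_center"
  by (auto simp: ring_center_def algebra_simps)
lemma center_diff[simp]: "(a::'a::ring_1) \<in> ring_center \<Longrightarrow> b \<in> ring_center \<Longrightarrow> a - b \<in> ring_center"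
  by (auto simp: ring_center_def algebra_simps)
lemma center_comm: "(a::'a::ring_1) \<in> ring_center \<Longrightarrow> a * x = x * a"
  by (simp add: ring_center_def)
lemma center_mult[simp]: "(a::'a::ring_1) \<in> ring_center \<Longrightarrow> b \<in> ring_center \<Longrightarrow> a * b \<in> ring_center"
proof -
  assume a: "a \<in> ring_center" and b: "b \<in> ring_center"
  show ?thesis unfolding ring_center_def
  proof
    show "\<forall>x. a * b * x = x * (a * b)"
    proof
      fix x
      have "a * b * x = a * (x * b)" using center_comm[OF b, of x] by (simp add: mult.assoc)
      also have "\<dots> = (a * x) * b" by (simp add: mult.assoc)
      also have "\<dots> = x * (a * b)" using center_comm[OF a, of x] by (simp add: mult.assoc)
      finally show "a * b * x = x * (a * b)" .
    qed
  qed
qed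
lemma center_inverse[simp]: "(a::'a::division_ring) \<in> ring_center \<Longrightarrow> inverse a \<in> ring_center"
proof -
  assume a: "a \<in> ring_center"
  show ?thesis
  proof (cases "a = 0")
    case True then show ?thesis by simp
  next
    case False
    show ?thesis unfolding ring_center_def
    proof (intro CollectI allI)
      fix x
      have "inverse a * x = inverse a * (x * a) * inverse a" using False
        by (simp add: mult.assoc)
      also have "\<dots> = inverse a * (a * x) * inverse a" using center_comm[OF a, of x] by simp
      also have "\<dots> = x * inverse a" using False by (simp add: mult.assoc[symmetric])
      finally show "inverse a * x = x * inverse a" .
    qed
  qed
qed
lemma center_power[simp]: "(a::'a::ring_1) \<in> ring_center \<Longrightarrow> a ^ k \<in> ring_center"
  by (induct k) auto
lemma center_sum[simp]: "(\<And>i. i \<in> I \<Longrightarrow> (f i::'a::ring_1) \<in> ring_center) \<Longrightarrow> sum f I \<in> ring_center"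
  by (induct I rule: infinite_finite_induct) auto

typedef (overloaded) ('a::division_ring) cen = "ring_center :: 'a set"
  morphisms rep_cen Abs_cen
  by (rule exI[of _ 0]) simp

setup_lifting type_definition_cen

instantiation cen :: (division_ring) field
begin
lift_definition zero_cen :: "'a cen" is 0 by simp
lift_definition one_cen :: "'a cen" is 1 by simp
lift_definition plus_cen :: "'a cen \<Rightarrow> 'a cen \<Rightarrow> 'a cen" is "(+)" by simp
lift_definition minus_cen :: "'a cen \<Rightarrow> 'a cen \<Rightarrow> 'a cen" is "(-)" by simp
lift_definition uminus_cen :: "'a cen \<Rightarrow> 'a cen" is "uminus" by simp
lift_definition times_cen :: "'a cen \<Rightarrow> 'a cen \<Rightarrow> 'a cen" is "(*)" by simp
lift_definition inverse_cen :: "'a cen \<Rightarrow> 'a cen" is "inverse" by simp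
lift_definition divide_cen :: "'a cen \<Rightarrow> 'a cen \<Rightarrow> 'a cen" is "\<lambda>a b. a * inverse b" by simp
instance
  by standard (transfer; auto simp: algebra_simps center_comm)+
end

definition pev :: "'a::division_ring poly \<Rightarrow> 'a \<Rightarrow> 'a" where
  "pev p x = (\<Sum>k\<le>degree p. coeff p k * x ^ k)"

lemma rep_cen_sum: "rep_cen (sum f I) = (\<Sum>i\<in>I. rep_cen (f i))"
  by (induct I rule: infinite_finite_induct) (auto simp: zero_cen.rep_eq plus_cen.rep_eq)
lemma rep_cen_power: "rep_cen (x ^ k) = rep_cen x ^ k"
  by (induct k) (auto simp: one_cen.rep_eq times_cen.rep_eq)

lemma pev_center: "\<forall>i. coeff p i \<in> ring_center \<Longrightarrow> x \<in> ring_center \<Longrightarrow> pev p x \<in> ring_center"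
  unfolding pev_def by (auto)

lemma fiber_finite:
  fixes p :: "'a::division_ring poly"
  assumes c: "\<forall>i. coeff p i \<in> ring_center" and d: "degree p \<ge> 1" and v: "v \<in> ring_center"
  shows "finite {x \<in> ring_center. pev p x = v}"
proof -
  define f :: "'a \<Rightarrow> 'a cen" where "f x = (if x \<in> ring_center then Abs_cen x else 1)" for x
  have f0: "f 0 = 0" by (simp add: f_def zero_cen_def)
  have fnz: "f x \<noteq> 0" if "x \<noteq> 0" for x
    using that by (auto simp: f_def zero_cen_def Abs_cen_inject one_cen_def)
  define P where "P = map_poly f p"
  have degP: "degree P = degree p" unfolding P_def by (rule degree_map_poly) (rule fnz)
  have coP: "coeff P k = Abs_cen (coeff p k)" for k
    unfolding P_def using c by (simp add: coeff_map_poly[of f, OF f0] f_def)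
  define Q where "Q = P - [:Abs_cen v:]"
  have "coeff Q (degree p) = coeff P (degree p)" using d by (simp add: Q_def coeff_pCons split: nat.split)
  also have "\<dots> \<noteq> 0"
  proof -
    have "lead_coeff p \<noteq> 0" using d by auto
    then have "f (lead_coeff p) \<noteq> 0" by (rule fnz)
    then show ?thesis using coP c by (simp add: f_def)
  qed
  finally have Qnz: "Q \<noteq> 0" by auto
  have ev: "rep_cen (poly P (Abs_cen x)) = pev p x" if x: "x \<in> ring_center" for x
  proof -
    have "rep_cen (poly P (Abs_cen x)) = (\<Sum>i\<le>degree p. rep_cen (coeff P i * Abs_cen x ^ i))"
      by (simp add: poly_altdef degP rep_cen_sum)
    also have "\<dots> = pev p x" unfolding pev_def
      by (intro sum.cong refl) (simp add: coP times_cen.rep_eq rep_cen_power Abs_cen_inverse c x)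
    finally show ?thesis .
  qed
  have "{x \<in> ring_center. pev p x = v} \<subseteq> rep_cen ` {y. poly Q y = 0}"
  proof
    fix x assume x: "x \<in> {x \<in> ring_center. pev p x = v}"
    then have xc: "x \<in> ring_center" and pv: "pev p x = v" by auto
    have "rep_cen (poly Q (Abs_cen x)) = 0"
      using ev[OF xc] pv v by (simp add: Q_def minus_cen.rep_eq Abs_cen_inverse)
    then have "poly Q (Abs_cen x) = 0" by (metis zero_cen.rep_eq rep_cen_inject)
    moreover have "x = rep_cen (Abs_cen x)" using xc by (simp add: Abs_cen_inverse)
    ultimately show "x \<in> rep_cen ` {y. poly Q y = 0}" by blast
  qed
  moreover have "finite (rep_cen ` {y. poly Q y = 0})" using poly_roots_finite[OF Qnz] by simp
  ultimately show ?thesis by (rule finite_subset)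
qed

lemma pev_image_infinite:
  fixes p :: "'a::division_ring poly"
  assumes inf: "infinite (ring_center :: 'a set)" and c: "\<forall>i. coeff p i \<in> ring_center" and d: "degree p \<ge> 1"
  shows "infinite (pev p ` ring_center)"
proof
  assume fin: "finite (pev p ` ring_center)"
  have "ring_center \<subseteq> (\<Union>v\<in>pev p ` ring_center. {x \<in> ring_center. pev p x = v})" by auto
  moreover have "finite (\<Union>v\<in>pev p ` ring_center. {x \<in> ring_center. pev p x = v})"
    using fin by (rule finite_UN_I) (auto intro!: fiber_finite[OF c d] pev_center[OF c])
  ultimately show False using inf finite_subset by blast
qed

lemma distinct_values:
  fixes p :: "'a::division_ring poly" and n :: nat
  assumes inf: "infinite (ring_center :: 'a set)" and c: "\<forall>i. coeff p i \<in> ring_center" and d: "degree p \<ge> 1"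
  shows "\<exists>lam. (\<forall>i. lam i \<in> ring_center) \<and> inj_on (\<lambda>i. pev p (lam i)) {..<n}"
proof -
  obtain B :: "'a set" where B: "finite B" "card B = n" "B \<subseteq> pev p ` ring_center"
    using infinite_arbitrarily_large[OF pev_image_infinite[OF inf c d]] by blast
  obtain h where h: "bij_betw h {0..<card B} B" using ex_bij_betw_nat_finite[OF B(1)] by blast
  define lam where "lam i = (if i < n then (SOME x. x \<in> ring_center \<and> pev p x = h i) else 0)" for i
  have l: "lam i \<in> ring_center \<and> (i < n \<longrightarrow> pev p (lam i) = h i)" for i
  proof (cases "i < n")
    case True
    then have "h i \<in> pev p ` ring_center" using h B by (auto simp: bij_betw_def)
    then have ex: "\<exists>x. x \<in> ring_center \<and> pev p x = h i" by auto
    have "(SOME x. x \<in> ring_center \<and> pev p x = h i) \<in> ring_center \<and>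
      pev p (SOME x. x \<in> ring_center \<and> pev p x = h i) = h i" by (rule someI_ex[OF ex])
    then show ?thesis using True unfolding lam_def by simp
  qed (simp add: lam_def)
  have hinj: "inj_on h {0..<n}" using h B(2) by (simp add: bij_betw_def)
  have "inj_on (\<lambda>i. pev p (lam i)) {..<n}"
  proof (rule inj_onI)
    fix i j assume i: "i \<in> {..<n}" and j: "j \<in> {..<n}" and e: "pev p (lam i) = pev p (lam j)"
    then have "h i = h j" using l[of i] l[of j] by simp
    then show "i = j" using hinj i j by (auto simp: inj_on_def)
  qed
  then show ?thesis using l by blast
qed

definition dg :: "nat \<Rightarrow> (nat \<Rightarrow> 'a::ring_1) \<Rightarrow> 'a mat" where
  "dg n v = mat n n (\<lambda>(i,j). if i = j then v i else 0)"

definition Pm :: "nat \<Rightarrow> (nat \<Rightarrow> nat) \<Rightarrow> 'a::ring_1 mat" where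
  "Pm n \<pi> = mat n n (\<lambda>(i,j). if i = \<pi> j then 1 else 0)"

lemma dg_carrier[simp]: "dg n v \<in> carrier_mat n n" by (simp add: dg_def)
lemma Pm_carrier[simp]: "Pm n \<pi> \<in> carrier_mat n n" by (simp add: Pm_def)
lemma dg_dims[simp]: "dim_row (dg n v) = n" "dim_col (dg n v) = n" by (simp_all add: dg_def)
lemma Pm_dims[simp]: "dim_row (Pm n \<pi>) = n" "dim_col (Pm n \<pi>) = n" by (simp_all add: Pm_def)
lemma dg_index[simp]: "i < n \<Longrightarrow> j < n \<Longrightarrow> dg n v $$ (i,j) = (if i = j then v i else 0)"
  by (simp add: dg_def)
lemma Pm_index[simp]: "i < n \<Longrightarrow> j < n \<Longrightarrow> Pm n \<pi> $$ (i,j) = (if i = \<pi> j then 1 else 0)"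
  by (simp add: Pm_def)

lemma dg_mult_index: "A \<in> carrier_mat n m \<Longrightarrow> i < n \<Longrightarrow> j < m \<Longrightarrow> (dg n v * A) $$ (i,j) = v i * A $$ (i,j)"
proof -
  assume A: "A \<in> carrier_mat n m" and i: "i < n" and j: "j < m"
  have "(dg n v * A) $$ (i,j) = (\<Sum>k\<in>{0..<n}. (if i = k then v i else 0) * A $$ (k,j))"
    using A i j by (simp add: scalar_prod_def)
  also have "\<dots> = (\<Sum>k\<in>{0..<n}. if i = k then v i * A $$ (k,j) else 0)"
    by (intro sum.cong) auto
  also have "\<dots> = v i * A $$ (i,j)" using i by simp
  finally show ?thesis .
qed

lemma mult_dg_index: "A \<in> carrier_mat m n \<Longrightarrow> i < m \<Longrightarrow> j < n \<Longrightarrow> (A * dg n v) $$ (i,j) = A $$ (i,j) * v j"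
proof -
  assume A: "A \<in> carrier_mat m n" and i: "i < m" and j: "j < n"
  have "(A * dg n v) $$ (i,j) = (\<Sum>k\<in>{0..<n}. A $$ (i,k) * (if k = j then v k else 0))"
    using A i j by (simp add: scalar_prod_def)
  also have "\<dots> = (\<Sum>k\<in>{0..<n}. if k = j then A $$ (i,k) * v k else 0)"
    by (intro sum.cong) auto
  also have "\<dots> = A $$ (i,j) * v j" using j by simp
  finally show ?thesis .
qed

lemma Pm_mult_index:
  assumes p: "\<pi> permutes {..<n}" and A: "A \<in> carrier_mat n m" and i: "i < n" and j: "j < m"
  shows "(Pm n \<pi> * A) $$ (i,j) = A $$ (inv_into UNIV \<pi> i, j)"
proof -
  have "(Pm n \<pi> * A) $$ (i,j) = (\<Sum>k\<in>{0..<n}. (if i = \<pi> k then 1 else 0) * A $$ (k,j))"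
    using A i j by (simp add: scalar_prod_def)
  also have "\<dots> = (\<Sum>k\<in>{0..<n}. if k = inv_into UNIV \<pi> i then A $$ (k,j) else 0)"
    by (intro sum.cong refl) (auto simp: permutes_inverses(2)[OF p] permutes_inverses(1)[OF p])
  also have "\<dots> = A $$ (inv_into UNIV \<pi> i, j)"
    using i p by (simp add: permutes_inv[OF p, THEN permutes_in_image] lessThan_atLeast0[symmetric])
  finally show ?thesis .
qed

lemma mult_Pm_index:
  assumes p: "\<pi> permutes {..<n}" and A: "A \<in> carrier_mat m n" and i: "i < m" and j: "j < n"
  shows "(A * Pm n \<pi>) $$ (i,j) = A $$ (i, \<pi> j)"
proof -
  have "(A * Pm n \<pi>) $$ (i,j) = (\<Sum>k\<in>{0..<n}. A $$ (i,k) * (if k = \<pi> j then 1 else 0))"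
    using A i j by (simp add: scalar_prod_def)
  also have "\<dots> = (\<Sum>k\<in>{0..<n}. if k = \<pi> j then A $$ (i,k) else 0)"
    by (intro sum.cong refl) auto
  also have "\<dots> = A $$ (i, \<pi> j)"
    using j p by (simp add: permutes_in_image[OF p] lessThan_atLeast0[symmetric])
  finally show ?thesis .
qed

lemma Pm_inv_right: assumes p: "\<pi> permutes {..<n}"
  shows "Pm n \<pi> * Pm n (inv_into UNIV \<pi>) = (1\<^sub>m n :: 'a::ring_1 mat)"
proof (rule eq_matI)
  fix i j assume i: "i < dim_row (1\<^sub>m n :: 'a mat)" and j: "j < dim_col (1\<^sub>m n :: 'a mat)"
  have ip: "inv_into UNIV \<pi> permutes {..<n}" by (rule permutes_inv[OF p])
  have "(Pm n \<pi> * Pm n (inv_into UNIV \<pi>)) $$ (i,j) = (Pm n (inv_into UNIV \<pi>) :: 'a mat) $$ (inv_into UNIV \<pi> i, j)"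
    using i j by (intro Pm_mult_index[OF p, where m=n]) auto
  also have "\<dots> = (1\<^sub>m n :: 'a mat) $$ (i,j)" using i j permutes_in_image[OF ip, of i]
    by (auto simp: permutes_inverses[OF p] permutes_inv_eq[OF p])
  finally show "(Pm n \<pi> * Pm n (inv_into UNIV \<pi>)) $$ (i,j) = (1\<^sub>m n :: 'a mat) $$ (i,j)" .
qed auto

lemma Pm_inv_left: assumes p: "\<pi> permutes {..<n}"
  shows "Pm n (inv_into UNIV \<pi>) * Pm n \<pi> = (1\<^sub>m n :: 'a::ring_1 mat)"
proof -
  have ip: "inv_into UNIV \<pi> permutes {..<n}" by (rule permutes_inv[OF p])
  have "inv_into UNIV (inv_into UNIV \<pi>) = \<pi>" by (rule inv_inv_eq[OF permutes_bij[OF p]])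
  then show ?thesis using Pm_inv_right[OF ip] by simp
qed

lemma Pm_conj_index:
  assumes p: "\<pi> permutes {..<n}" and B: "B \<in> carrier_mat n n" and i: "i < n" and j: "j < n"
  shows "(Pm n (inv_into UNIV \<pi>) * B * Pm n \<pi>) $$ (i,j) = B $$ (\<pi> i, \<pi> j)"
proof -
  have ip: "inv_into UNIV \<pi> permutes {..<n}" by (rule permutes_inv[OF p])
  have "(Pm n (inv_into UNIV \<pi>) * B * Pm n \<pi>) $$ (i,j) = (Pm n (inv_into UNIV \<pi>) * B) $$ (i, \<pi> j)"
    using i j B by (intro mult_Pm_index[OF p, where m=n]) auto
  also have "\<dots> = B $$ (inv_into UNIV (inv_into UNIV \<pi>) i, \<pi> j)"
    using i j B permutes_in_image[OF p, of j] by (intro Pm_mult_index[OF ip, where m=n]) auto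
  also have "\<dots> = B $$ (\<pi> i, \<pi> j)" by (simp add: inv_inv_eq[OF permutes_bij[OF p]])
  finally show ?thesis .
qed

lemma Pm_dg_conj:
  assumes p: "\<pi> permutes {..<n}"
  shows "Pm n \<pi> * dg n a * Pm n (inv_into UNIV \<pi>) = dg n (\<lambda>i. a (inv_into UNIV \<pi> i))"
proof (rule eq_matI)
  fix i j assume i: "i < dim_row (dg n (\<lambda>i. a (inv_into UNIV \<pi> i)))" and j: "j < dim_col (dg n (\<lambda>i. a (inv_into UNIV \<pi> i)))"
  have ip: "inv_into UNIV \<pi> permutes {..<n}" by (rule permutes_inv[OF p])
  have "(Pm n \<pi> * dg n a * Pm n (inv_into UNIV \<pi>)) $$ (i,j) = (Pm n \<pi> * dg n a) $$ (i, inv_into UNIV \<pi> j)"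
    using i j by (intro mult_Pm_index[OF ip, where m=n]) auto
  also have "\<dots> = dg n a $$ (inv_into UNIV \<pi> i, inv_into UNIV \<pi> j)"
    using i j permutes_in_image[OF ip, of j] by (intro Pm_mult_index[OF p, where m=n]) auto
  also have "\<dots> = dg n (\<lambda>i. a (inv_into UNIV \<pi> i)) $$ (i,j)"
    using i j permutes_in_image[OF ip, of j] permutes_in_image[OF ip, of i]
    by (auto simp: permutes_inverses[OF p] permutes_inv_eq[OF p])
  finally show "(Pm n \<pi> * dg n a * Pm n (inv_into UNIV \<pi>)) $$ (i,j) = dg n (\<lambda>i. a (inv_into UNIV \<pi> i)) $$ (i,j)" .
qed auto

lemma dg_mult_dg: "dg n u * dg n v = dg n (\<lambda>i. u i * v i)"
  by (rule eq_matI) (auto simp: dg_mult_index[where m=n] simp del: index_mult_mat(1))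

lemma dg_one: "dg n (\<lambda>i. 1) = 1\<^sub>m n"
  by (rule eq_matI) auto

lemma smult_mult_assoc': "X \<in> carrier_mat n m \<Longrightarrow> V \<in> carrier_mat m l \<Longrightarrow>
  (c \<cdot>\<^sub>m X) * V = c \<cdot>\<^sub>m (X * V :: 'a::ring_1 mat)"
proof (rule eq_matI)
  fix i j assume X: "X \<in> carrier_mat n m" and V: "V \<in> carrier_mat m l"
    and i: "i < dim_row (c \<cdot>\<^sub>m (X * V))" and j: "j < dim_col (c \<cdot>\<^sub>m (X * V))"
  then show "((c \<cdot>\<^sub>m X) * V) $$ (i,j) = (c \<cdot>\<^sub>m (X * V)) $$ (i,j)"
    by (simp add: scalar_prod_def sum_distrib_left mult.assoc)
qed auto

lemma mult_smult_central: "c \<in> ring_center \<Longrightarrow> U \<in> carrier_mat n m \<Longrightarrow> X \<in> carrier_mat m l \<Longrightarrow>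
  U * (c \<cdot>\<^sub>m X) = c \<cdot>\<^sub>m (U * X :: 'a::ring_1 mat)"
proof (rule eq_matI)
  fix i j assume c: "c \<in> ring_center" and U: "U \<in> carrier_mat n m" and X: "X \<in> carrier_mat m l"
    and i: "i < dim_row (c \<cdot>\<^sub>m (U * X))" and j: "j < dim_col (c \<cdot>\<^sub>m (U * X))"
  have "((U * (c \<cdot>\<^sub>m X)) $$ (i,j)) = (\<Sum>k\<in>{0..<m}. U $$ (i,k) * (c * X $$ (k,j)))"
    using U X i j by (simp add: scalar_prod_def)
  also have "\<dots> = (\<Sum>k\<in>{0..<m}. c * (U $$ (i,k) * X $$ (k,j)))"
    by (intro sum.cong refl) (metis center_comm[OF c] mult.assoc)
  also have "\<dots> = (c \<cdot>\<^sub>m (U * X)) $$ (i,j)"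
    using U X i j by (simp add: scalar_prod_def sum_distrib_left)
  finally show "(U * (c \<cdot>\<^sub>m X)) $$ (i,j) = (c \<cdot>\<^sub>m (U * X)) $$ (i,j)" .
qed auto

definition inv_pair :: "nat \<Rightarrow> 'a::ring_1 mat \<Rightarrow> 'a mat \<Rightarrow> bool" where
  "inv_pair n U V \<longleftrightarrow> U \<in> carrier_mat n n \<and> V \<in> carrier_mat n n \<and> U * V = 1\<^sub>m n \<and> V * U = 1\<^sub>m n"

lemma inv_pair_sym: "inv_pair n U V \<Longrightarrow> inv_pair n V U" by (auto simp: inv_pair_def)

lemma inv_pair_mult: assumes "inv_pair n U V" "inv_pair n U' V'"
  shows "inv_pair n (U * U') (V' * V)"
proof -
  from assms have c: "U \<in> carrier_mat n n" "V \<in> carrier_mat n n" "U' \<in> carrier_mat n n" "V' \<in> carrier_mat n n"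
    and e: "U * V = 1\<^sub>m n" "V * U = 1\<^sub>m n" "U' * V' = 1\<^sub>m n" "V' * U' = 1\<^sub>m n"
    by (auto simp: inv_pair_def)
  have "U * U' * (V' * V) = U * (U' * V') * V" using c by (simp add: assoc_mult_mat[of _ n n _ n _ n])
  also have "\<dots> = 1\<^sub>m n" using c e by simp
  finally have 1: "U * U' * (V' * V) = 1\<^sub>m n" .
  have "V' * V * (U * U') = V' * (V * U) * U'" using c by (simp add: assoc_mult_mat[of _ n n _ n _ n])
  also have "\<dots> = 1\<^sub>m n" using c e by simp
  finally have 2: "V' * V * (U * U') = 1\<^sub>m n" .
  show ?thesis using 1 2 c by (simp add: inv_pair_def)
qed

lemma inv_pair_Pm: "\<pi> permutes {..<n} \<Longrightarrow> inv_pair n (Pm n \<pi>) (Pm n (inv_into UNIV \<pi>))"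
  by (simp add: inv_pair_def Pm_inv_right Pm_inv_left)

lemma inv_pair_one: "inv_pair n (1\<^sub>m n) (1\<^sub>m n)" by (simp add: inv_pair_def)

lemma pow_conj: assumes "inv_pair n U V" and A: "A \<in> carrier_mat n n"
  shows "(U * A * V) ^\<^sub>m k = U * (A ^\<^sub>m k) * V"
proof (induct k)
  case 0
  from assms have "U \<in> carrier_mat n n" "V \<in> carrier_mat n n" "U * V = 1\<^sub>m n"
    by (auto simp: inv_pair_def)
  then show ?case using A by simp
next
  case (Suc k)
  from assms have c: "U \<in> carrier_mat n n" "V \<in> carrier_mat n n" and e: "V * U = 1\<^sub>m n"
    by (auto simp: inv_pair_def)
  have Ak: "A ^\<^sub>m k \<in> carrier_mat n n" using A by simp
  have vux: "V * (U * X) = X" if "X \<in> carrier_mat n n" for X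
  proof -
    have "V * (U * X) = (V * U) * X" using c that by (simp add: assoc_mult_mat[of _ n n _ n _ n])
    then show ?thesis using e that by simp
  qed
  have "(U * A * V) ^\<^sub>m Suc k = U * (A ^\<^sub>m k) * V * (U * A * V)" using Suc by simp
  also have "\<dots> = (U * (A ^\<^sub>m k)) * (V * (U * A * V))"
    by (rule assoc_mult_mat[of _ n n _ n _ n]) (use c A Ak in auto)
  also have "V * (U * A * V) = (V * U) * (A * V)"
  proof -
    have "U * A * V = U * (A * V)" by (rule assoc_mult_mat[of _ n n _ n _ n]) (use c A in auto)
    then have "V * (U * A * V) = V * (U * (A * V))" by simp
    also have "\<dots> = (V * U) * (A * V)" by (rule assoc_mult_mat[symmetric, of _ n n _ n _ n]) (use c A in auto)
    finally show ?thesis .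
  qed
  also have "(V * U) * (A * V) = A * V" using e c A by simp
  also have "U * (A ^\<^sub>m k) * (A * V) = U * (A ^\<^sub>m k) * A * V"
    by (rule assoc_mult_mat[symmetric, of _ n n _ n _ n]) (use c A Ak in auto)
  also have "U * (A ^\<^sub>m k) * A = U * (A ^\<^sub>m k * A)"
    by (rule assoc_mult_mat[of _ n n _ n _ n]) (use c A Ak in auto)
  also have "A ^\<^sub>m k * A = A ^\<^sub>m Suc k" by simp
  finally show ?case .
qed

fun psum :: "'a::ring_1 poly \<Rightarrow> 'a mat \<Rightarrow> nat \<Rightarrow> 'a mat" where
  "psum p A 0 = coeff p 0 \<cdot>\<^sub>m (A ^\<^sub>m 0)"
| "psum p A (Suc m) = psum p A m + coeff p (Suc m) \<cdot>\<^sub>m (A ^\<^sub>m Suc m)"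

lemma psum_carrier: "A \<in> carrier_mat n n \<Longrightarrow> psum p A m \<in> carrier_mat n n"
  by (induct m) auto

lemma psum_index: "A \<in> carrier_mat n n \<Longrightarrow> i < n \<Longrightarrow> j < n \<Longrightarrow>
  psum p A m $$ (i,j) = (\<Sum>k\<le>m. coeff p k * (A ^\<^sub>m k) $$ (i,j))"
proof (induct m)
  case 0 then show ?case by simp
next
  case (Suc m)
  then show ?case using psum_carrier[OF Suc(2), of p m] by simp
qed

lemma psum_dims[simp]: "A \<in> carrier_mat n n \<Longrightarrow> dim_row (psum p A m) = n"
  "A \<in> carrier_mat n n \<Longrightarrow> dim_col (psum p A m) = n"
  using psum_carrier[of A n p m] by auto

lemma poly_mat_psum: "A \<in> carrier_mat n n \<Longrightarrow> poly_mat p A = psum p A (degree p)"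
  by (rule eq_matI) (auto simp: poly_mat_def psum_index psum_carrier[of A n p])

lemma poly_mat_carrier: "A \<in> carrier_mat n n \<Longrightarrow> poly_mat p A \<in> carrier_mat n n"
  by (simp add: poly_mat_psum psum_carrier)

lemma psum_conj: assumes ip: "inv_pair n U V" and A: "A \<in> carrier_mat n n"
  and c: "\<forall>i. coeff p i \<in> ring_center"
  shows "U * psum p A m * V = psum p (U * A * V) m"
proof (induct m)
  case 0
  from ip have cU: "U \<in> carrier_mat n n" and cV: "V \<in> carrier_mat n n" by (auto simp: inv_pair_def)
  have A0: "A ^\<^sub>m 0 \<in> carrier_mat n n" using A by (rule pow_carrier_mat)
  have "U * psum p A 0 * V = U * (coeff p 0 \<cdot>\<^sub>m (A ^\<^sub>m 0)) * V" by simp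
  also have "\<dots> = coeff p 0 \<cdot>\<^sub>m (U * (A ^\<^sub>m 0)) * V"
    using mult_smult_central[OF _ cU A0, of "coeff p 0"] c by simp
  also have "\<dots> = coeff p 0 \<cdot>\<^sub>m (U * (A ^\<^sub>m 0) * V)"
    by (rule smult_mult_assoc'[of _ n n _ n]) (use cU A0 cV in auto)
  finally have "U * psum p A 0 * V = coeff p 0 \<cdot>\<^sub>m (U * (A ^\<^sub>m 0) * V)" .
  then show ?case using pow_conj[OF ip A, of 0] by simp
next
  case (Suc m)
  from ip have cU: "U \<in> carrier_mat n n" and cV: "V \<in> carrier_mat n n" by (auto simp: inv_pair_def)
  have ps: "psum p A m \<in> carrier_mat n n" by (rule psum_carrier[OF A])
  have Ak: "A ^\<^sub>m Suc m \<in> carrier_mat n n" using A by (rule pow_carrier_mat)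
  have "U * psum p A (Suc m) * V = U * psum p A m * V + U * (coeff p (Suc m) \<cdot>\<^sub>m (A ^\<^sub>m Suc m)) * V"
    using cU cV ps Ak by (simp add: mult_add_distrib_mat[of _ n n] add_mult_distrib_mat[of _ n n])
  also have "U * (coeff p (Suc m) \<cdot>\<^sub>m (A ^\<^sub>m Suc m)) * V = coeff p (Suc m) \<cdot>\<^sub>m (U * (A ^\<^sub>m Suc m)) * V"
    using mult_smult_central[OF _ cU Ak, of "coeff p (Suc m)"] c by simp
  also have "\<dots> = coeff p (Suc m) \<cdot>\<^sub>m (U * (A ^\<^sub>m Suc m) * V)"
    by (rule smult_mult_assoc'[of _ n n _ n]) (use cU Ak cV in auto)
  finally show ?case using Suc pow_conj[OF ip A, of "Suc m"] by simp
qed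

lemma poly_mat_conj: assumes ip: "inv_pair n U V" and A: "A \<in> carrier_mat n n"
  and c: "\<forall>i. coeff p i \<in> ring_center"
  shows "poly_mat p (U * A * V) = U * poly_mat p A * V"
proof -
  from ip have cU: "U \<in> carrier_mat n n" and cV: "V \<in> carrier_mat n n" by (auto simp: inv_pair_def)
  have "U * A * V \<in> carrier_mat n n" using cU cV A by simp
  then show ?thesis using psum_conj[OF ip A c] poly_mat_psum[OF A, of p] poly_mat_psum[of "U * A * V" n p] by simp
qed

lemma dg_pow: "dg n lam ^\<^sub>m k = dg n (\<lambda>i. lam i ^ k)"
  by (induct k) (auto simp: dg_one[symmetric] dg_mult_dg power_commutes)

lemma poly_mat_dg: "poly_mat p (dg n lam) = dg n (\<lambda>i. pev p (lam i))"
  by (rule eq_matI) (auto simp: poly_mat_def dg_pow pev_def if_distrib[of "\<lambda>x. _ * x"] cong: if_cong)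

lemma assoc5: "A \<in> carrier_mat n n \<Longrightarrow> B \<in> carrier_mat n n \<Longrightarrow> C \<in> carrier_mat n n \<Longrightarrow>
  D \<in> carrier_mat n n \<Longrightarrow> E \<in> carrier_mat n n \<Longrightarrow>
  (A * B * C) * (D * E) = A * B * (C * D) * (E :: 'a::semiring_1 mat)"
  by (simp add: assoc_mult_mat[of _ n n _ n _ n])

lemma assoc5': "A \<in> carrier_mat n n \<Longrightarrow> B \<in> carrier_mat n n \<Longrightarrow> C \<in> carrier_mat n n \<Longrightarrow>
  D \<in> carrier_mat n n \<Longrightarrow> E \<in> carrier_mat n n \<Longrightarrow>
  (A * B) * (C * D * E) = A * (B * C) * D * (E :: 'a::semiring_1 mat)"
  by (simp add: assoc_mult_mat[of _ n n _ n _ n])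

lemma S_pair:
  fixes p :: "'a::division_ring poly"
  assumes c: "\<forall>i. coeff p i \<in> ring_center" and lam: "\<forall>i. lam i \<in> ring_center"
    and ip1: "inv_pair n U V" and ip2: "inv_pair n U' V'"
  shows "U * dg n (\<lambda>i. pev p (lam i)) * V - U' * dg n (\<lambda>i. pev p (lam i)) * V' \<in> poly_commutators p n"
proof -
  from ip1 ip2 have cc: "U \<in> carrier_mat n n" "V \<in> carrier_mat n n" "U' \<in> carrier_mat n n" "V' \<in> carrier_mat n n"
    and e: "U * V = 1\<^sub>m n" "V * U = 1\<^sub>m n" "U' * V' = 1\<^sub>m n" "V' * U' = 1\<^sub>m n"
    by (auto simp: inv_pair_def)
  define L where "L = (dg n lam :: 'a mat)"
  have cL: "L \<in> carrier_mat n n" by (simp add: L_def)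
  define A where "A = U * L * V'"
  define B where "B = U' * V"
  have cA: "A \<in> carrier_mat n n" and cB: "B \<in> carrier_mat n n" using cc cL by (auto simp: A_def B_def)
  have AB: "A * B = U * L * V"
    unfolding A_def B_def using assoc5[OF cc(1) cL cc(4) cc(3) cc(2)] e cc cL by simp
  have BA: "B * A = U' * L * V'"
    unfolding A_def B_def using assoc5'[OF cc(3) cc(2) cc(1) cL cc(4)] e cc cL by simp
  have "poly_mat p (A * B) = U * dg n (\<lambda>i. pev p (lam i)) * V"
    unfolding AB using poly_mat_conj[OF ip1 cL c] by (simp add: L_def poly_mat_dg)
  moreover have "poly_mat p (B * A) = U' * dg n (\<lambda>i. pev p (lam i)) * V'"
    unfolding BA using poly_mat_conj[OF ip2 cL c] by (simp add: L_def poly_mat_dg)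
  ultimately show ?thesis unfolding poly_commutators_def mem_Collect_eq
    by (intro exI[of _ A] exI[of _ B]) (use cA cB in simp)
qed

lemma S_conj:
  fixes p :: "'a::division_ring poly"
  assumes c: "\<forall>i. coeff p i \<in> ring_center" and X: "X \<in> poly_commutators p n" and ip: "inv_pair n W W'"
  shows "W * X * W' \<in> poly_commutators p n"
proof -
  from X obtain A B where X: "X = poly_mat p (A * B) - poly_mat p (B * A)"
    and cA: "A \<in> carrier_mat n n" and cB: "B \<in> carrier_mat n n"
    unfolding poly_commutators_def by blast
  from ip have cc: "W \<in> carrier_mat n n" "W' \<in> carrier_mat n n" and e: "W' * W = 1\<^sub>m n"
    by (auto simp: inv_pair_def)
  define A' where "A' = W * A * W'"
  define B' where "B' = W * B * W'"
  have cA': "A' \<in> carrier_mat n n" and cB': "B' \<in> carrier_mat n n" using cc cA cB by (auto simp: A'_def B'_def)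
  have 1: "A' * B' = W * (A * B) * W'"
    unfolding A'_def B'_def using assoc5[OF cc(1) cA cc(2) cc(1) cB, THEN arg_cong[where f="\<lambda>x. x * W'"]] e cc cA cB
    by (simp add: assoc_mult_mat[of _ n n _ n _ n])
  have 2: "B' * A' = W * (B * A) * W'"
    unfolding A'_def B'_def using assoc5[OF cc(1) cB cc(2) cc(1) cA, THEN arg_cong[where f="\<lambda>x. x * W'"]] e cc cA cB
    by (simp add: assoc_mult_mat[of _ n n _ n _ n])
  have P1: "poly_mat p (A * B) \<in> carrier_mat n n" and P2: "poly_mat p (B * A) \<in> carrier_mat n n"
    using cA cB by (auto intro: poly_mat_carrier)
  have "W * X * W' = W * poly_mat p (A * B) * W' - W * poly_mat p (B * A) * W'"
    unfolding X using cc P1 P2 by (simp add: mult_minus_distrib_mat[of _ n n] minus_mult_distrib_mat[of _ n n])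
  also have "\<dots> = poly_mat p (A' * B') - poly_mat p (B' * A')"
    unfolding 1 2 using poly_mat_conj[OF ip _ c] cA cB by simp
  finally show ?thesis unfolding poly_commutators_def using cA' cB' by blast
qed

lemma one_one_mult: "X \<in> carrier_mat (1::nat) k \<Longrightarrow> mat 1 1 (\<lambda>_. t) * X = mat 1 k (\<lambda>(i,j). t * X $$ (0,j))"
  by (rule eq_matI) (auto simp: scalar_prod_def)

lemma TRI:
  fixes T :: "'a::division_ring mat"
  assumes "T \<in> carrier_mat n n"
    and "\<forall>i j. i < n \<longrightarrow> j < i \<longrightarrow> T $$ (i,j) = 0"
    and "\<forall>i<n. T $$ (i,i) \<in> ring_center"
    and "\<forall>i<n. \<forall>j<n. i \<noteq> j \<longrightarrow> T $$ (i,i) \<noteq> T $$ (j,j)"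
  shows "\<exists>U V. inv_pair n U V \<and> T = U * dg n (\<lambda>i. T $$ (i,i)) * V"
  using assms
proof (induct n arbitrary: T)
  case 0
  have "T = 1\<^sub>m 0 * dg 0 (\<lambda>i. T $$ (i,i)) * 1\<^sub>m 0" using 0 by (intro eq_matI) auto
  then show ?case using inv_pair_one by blast
next
  case (Suc m T)
  obtain A B C D where sb: "split_block T 1 1 = (A,B,C,D)" by (cases "split_block T 1 1") auto
  have dimT: "dim_row T = 1 + m" "dim_col T = 1 + m" using Suc(2) by auto
  note spl = split_block[OF sb dimT]
  have cA: "A \<in> carrier_mat 1 1" and cB: "B \<in> carrier_mat 1 m" and cC: "C \<in> carrier_mat m 1"
    and cD: "D \<in> carrier_mat m m" and TAD: "T = four_block_mat A B C D" using spl by auto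
  have Aij: "A = mat 1 1 (\<lambda>_. T $$ (0,0))" using sb unfolding split_block_def Let_def by (auto intro!: eq_matI)
  have Bij: "\<And>j. j < m \<Longrightarrow> B $$ (0,j) = T $$ (0, Suc j)" using sb dimT unfolding split_block_def Let_def by auto
  have C0: "C = 0\<^sub>m m 1" using sb dimT Suc(3) unfolding split_block_def Let_def by (auto intro!: eq_matI)
  have Dij: "\<And>i j. i < m \<Longrightarrow> j < m \<Longrightarrow> D $$ (i,j) = T $$ (Suc i, Suc j)"
    using sb dimT unfolding split_block_def Let_def by auto
  have "\<exists>U V. inv_pair m U V \<and> D = U * dg m (\<lambda>i. D $$ (i,i)) * V"
  proof (rule Suc(1))
    show "D \<in> carrier_mat m m" by (rule cD)
    show "\<forall>i j. i < m \<longrightarrow> j < i \<longrightarrow> D $$ (i, j) = 0" using Suc(3) by (auto simp: Dij)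
    show "\<forall>i<m. D $$ (i, i) \<in> ring_center" using Suc(4) by (auto simp: Dij)
    show "\<forall>i<m. \<forall>j<m. i \<noteq> j \<longrightarrow> D $$ (i, i) \<noteq> D $$ (j, j)" using Suc(5) by (auto simp: Dij)
  qed
  then obtain U' V' where ip': "inv_pair m U' V'" and DUV: "D = U' * dg m (\<lambda>i. D $$ (i,i)) * V'" by blast
  from ip' have cU': "U' \<in> carrier_mat m m" and cV': "V' \<in> carrier_mat m m"
    and e1: "U' * V' = 1\<^sub>m m" and e2: "V' * U' = 1\<^sub>m m" by (auto simp: inv_pair_def)
  define t where "t = T $$ (0,0)"
  define \<delta> where "\<delta> i = T $$ (Suc i, Suc i)" for i
  have tc: "t \<in> ring_center" using Suc(4) by (simp add: t_def)
  have tne: "\<delta> j - t \<noteq> 0" if "j < m" for j using Suc(5) that by (auto simp: t_def \<delta>_def)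
  have Dl: "dg m (\<lambda>i. D $$ (i,i)) = dg m \<delta>" by (rule eq_matI) (auto simp: Dij \<delta>_def)
  define w where "w = B * U'"
  have cw: "w \<in> carrier_mat 1 m" using cB cU' by (simp add: w_def)
  define x where "x = mat 1 m (\<lambda>(i,j). w $$ (0,j) * inverse (\<delta> j - t))"
  have cx: "x \<in> carrier_mat 1 m" by (simp add: x_def)
  define At where "At = (mat 1 1 (\<lambda>_. t) :: 'a mat)"
  have cAt: "At \<in> carrier_mat 1 1" by (simp add: At_def)
  define U where "U = four_block_mat (1\<^sub>m 1) x (0\<^sub>m m 1) U'"
  define V where "V = four_block_mat (1\<^sub>m 1) (- (x * V')) (0\<^sub>m m 1) V'"
  have cxV: "x * V' \<in> carrier_mat 1 m" using cx cV' by simp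
  have UV: "U * V = 1\<^sub>m (Suc m)"
  proof -
    have "U * V = four_block_mat (1\<^sub>m 1 * 1\<^sub>m 1 + x * 0\<^sub>m m 1) (1\<^sub>m 1 * (- (x * V')) + x * V')
        (0\<^sub>m m 1 * 1\<^sub>m 1 + U' * 0\<^sub>m m 1) (0\<^sub>m m 1 * (- (x * V')) + U' * V')"
      unfolding U_def V_def
      by (rule mult_four_block_mat) (use cx cU' cV' cxV in \<open>auto intro: uminus_carrier_mat\<close>)
    also have "\<dots> = four_block_mat (1\<^sub>m 1) (0\<^sub>m 1 m) (0\<^sub>m m 1) (1\<^sub>m m)"
      using cx cU' cV' cxV e1 by (intro cong_four_block_mat) (auto intro!: eq_matI)
    also have "\<dots> = 1\<^sub>m (Suc m)" by simp
    finally show ?thesis .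
  qed
  have VU: "V * U = 1\<^sub>m (Suc m)"
  proof -
    have "V * U = four_block_mat (1\<^sub>m 1 * 1\<^sub>m 1 + (- (x * V')) * 0\<^sub>m m 1) (1\<^sub>m 1 * x + (- (x * V')) * U')
        (0\<^sub>m m 1 * 1\<^sub>m 1 + V' * 0\<^sub>m m 1) (0\<^sub>m m 1 * x + V' * U')"
      unfolding U_def V_def
      by (rule mult_four_block_mat) (use cx cU' cV' cxV in \<open>auto intro: uminus_carrier_mat\<close>)
    also have "(- (x * V')) * U' = - x"
      using assoc_mult_mat[OF cx cV' cU'] e2 cx uminus_mult_left_mat[of "x * V'" U'] cV' cU' by simp
    also have "four_block_mat (1\<^sub>m 1 * 1\<^sub>m 1 + (- (x * V')) * 0\<^sub>m m 1) (1\<^sub>m 1 * x + - x)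
        (0\<^sub>m m 1 * 1\<^sub>m 1 + V' * 0\<^sub>m m 1) (0\<^sub>m m 1 * x + V' * U') = four_block_mat (1\<^sub>m 1) (0\<^sub>m 1 m) (0\<^sub>m m 1) (1\<^sub>m m)"
      using cx cU' cV' cxV e2 by (intro cong_four_block_mat) (auto intro!: eq_matI)
    also have "\<dots> = 1\<^sub>m (Suc m)" by simp
    finally show ?thesis .
  qed
  have ip: "inv_pair (Suc m) U V"
    using UV VU cx cU' cV' cxV by (auto simp: inv_pair_def U_def V_def intro: uminus_carrier_mat)
  have Dg: "dg (Suc m) (\<lambda>i. T $$ (i,i)) = four_block_mat At (0\<^sub>m 1 m) (0\<^sub>m m 1) (dg m \<delta>)"
    by (rule eq_matI) (auto simp: At_def t_def \<delta>_def nth_Cons' split: if_splits)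
  have key: "x * dg m \<delta> + At * (- x) = w"
  proof (rule eq_matI)
    fix i j assume i: "i < dim_row w" and j: "j < dim_col w"
    then have i0: "i = 0" and jm: "j < m" using cw by auto
    have mx: "- x \<in> carrier_mat 1 m" using cx by (rule uminus_carrier_mat)
    have "(x * dg m \<delta> + At * (- x)) $$ (i,j) = (x * dg m \<delta>) $$ (0,j) + (At * (- x)) $$ (0,j)"
      using i0 jm cx cAt mx by simp
    also have "(x * dg m \<delta>) $$ (0,j) = x $$ (0,j) * \<delta> j" using mult_dg_index[OF cx, of 0 j \<delta>] jm by simp
    also have "(At * (- x)) $$ (0,j) = t * (- x) $$ (0,j)"
    proof -
      have "At * (- x) = mat 1 m (\<lambda>(i,j). t * (- x) $$ (0,j))" unfolding At_def by (rule one_one_mult[OF mx])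
      then show ?thesis using jm by simp
    qed
    also have "x $$ (0,j) * \<delta> j + t * (- x) $$ (0,j) = x $$ (0,j) * \<delta> j - t * x $$ (0,j)"
      using jm cx by simp
    also have "\<dots> = x $$ (0,j) * (\<delta> j - t)" using center_comm[OF tc] by (simp add: algebra_simps)
    also have "\<dots> = w $$ (0,j)" using jm tne[OF jm] by (simp add: x_def mult.assoc)
    finally show "(x * dg m \<delta> + At * (- x)) $$ (i,j) = w $$ (i,j)" using i0 by simp
  qed (use cx cw cAt in auto)
  have "U * dg (Suc m) (\<lambda>i. T $$ (i,i)) = four_block_mat (1\<^sub>m 1 * At + x * 0\<^sub>m m 1) (1\<^sub>m 1 * 0\<^sub>m 1 m + x * dg m \<delta>)
        (0\<^sub>m m 1 * At + U' * 0\<^sub>m m 1) (0\<^sub>m m 1 * 0\<^sub>m 1 m + U' * dg m \<delta>)"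
    unfolding U_def Dg by (rule mult_four_block_mat) (use cx cU' cAt in auto)
  also have "\<dots> = four_block_mat At (x * dg m \<delta>) (0\<^sub>m m 1) (U' * dg m \<delta>)"
    using cx cU' cAt by (intro cong_four_block_mat) (auto intro!: eq_matI)
  finally have UD: "U * dg (Suc m) (\<lambda>i. T $$ (i,i)) = four_block_mat At (x * dg m \<delta>) (0\<^sub>m m 1) (U' * dg m \<delta>)" .
  have cxd: "x * dg m \<delta> \<in> carrier_mat 1 m" and cud: "U' * dg m \<delta> \<in> carrier_mat m m" using cx cU' by auto
  have "U * dg (Suc m) (\<lambda>i. T $$ (i,i)) * V = four_block_mat (At * 1\<^sub>m 1 + x * dg m \<delta> * 0\<^sub>m m 1)
      (At * (- (x * V')) + x * dg m \<delta> * V') (0\<^sub>m m 1 * 1\<^sub>m 1 + U' * dg m \<delta> * 0\<^sub>m m 1)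
      (0\<^sub>m m 1 * (- (x * V')) + U' * dg m \<delta> * V')"
    unfolding UD V_def
    by (rule mult_four_block_mat[OF cAt cxd zero_carrier_mat cud one_carrier_mat uminus_carrier_mat[OF cxV] zero_carrier_mat cV'])
  also have "At * (- (x * V')) + x * dg m \<delta> * V' = (x * dg m \<delta> + At * (- x)) * V'"
  proof -
    have "At * (- (x * V')) = (At * (- x)) * V'"
      using assoc_mult_mat[OF cAt cx cV'] cAt cx cV' by simp
    moreover have "(x * dg m \<delta> + At * (- x)) * V' = x * dg m \<delta> * V' + At * (- x) * V'"
      by (rule add_mult_distrib_mat[of _ 1 m]) (use cx cAt cV' in \<open>auto intro: uminus_carrier_mat\<close>)
    moreover have "At * (- (x * V')) + x * dg m \<delta> * V' = x * dg m \<delta> * V' + At * (- (x * V'))"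
      by (rule comm_add_mat[of _ 1 m]) (use cx cAt cV' in \<open>auto intro: uminus_carrier_mat\<close>)
    ultimately show ?thesis by simp
  qed
  also have "\<dots> = B"
    unfolding key w_def using assoc_mult_mat[OF cB cU' cV'] e1 cB by simp
  also have "U' * dg m \<delta> * V' = D" using DUV Dl by simp
  also have "four_block_mat (At * 1\<^sub>m 1 + x * dg m \<delta> * 0\<^sub>m m 1) B (0\<^sub>m m 1 * 1\<^sub>m 1 + U' * dg m \<delta> * 0\<^sub>m m 1)
      (0\<^sub>m m 1 * (- (x * V')) + D) = four_block_mat A B C D"
  proof -
    have z: "0\<^sub>m m 1 * (- (x * V')) = 0\<^sub>m m m"
      by (rule left_mult_zero_mat) (use cxV in \<open>auto intro: uminus_carrier_mat\<close>)
    show ?thesis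
      using cAt cxd cud cD cxV Aij C0 z by (intro cong_four_block_mat) (auto simp: At_def t_def intro!: eq_matI)
  qed
  finally have "T = U * dg (Suc m) (\<lambda>i. T $$ (i,i)) * V" using TAD by simp
  then show ?case using ip by blast
qed

lemma mult_carrier_sq: "A \<in> carrier_mat n n \<Longrightarrow> B \<in> carrier_mat n n \<Longrightarrow> A * B \<in> carrier_mat n n"
  by simp

definition sim :: "nat \<Rightarrow> 'a::ring_1 mat \<Rightarrow> (nat \<Rightarrow> 'a) \<Rightarrow> bool" where
  "sim n T a \<longleftrightarrow> (\<exists>U V. inv_pair n U V \<and> T = U * dg n a * V)"

lemma sim_conj: assumes ip: "inv_pair n W W'" and s: "sim n T a"
  shows "sim n (W * T * W') a"
proof -
  from s obtain U V where ip2: "inv_pair n U V" and T: "T = U * dg n a * V" by (auto simp: sim_def)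
  from ip ip2 have c: "W \<in> carrier_mat n n" "W' \<in> carrier_mat n n" "U \<in> carrier_mat n n" "V \<in> carrier_mat n n"
    by (auto simp: inv_pair_def)
  have "W * T * W' = (W * U) * dg n a * (V * W')"
    unfolding T using c by (simp add: assoc_mult_mat[of _ n n _ n _ n] mult_carrier_sq)
  moreover have "inv_pair n (W * U) (V * W')" by (rule inv_pair_mult[OF ip ip2])
  ultimately show ?thesis unfolding sim_def by blast
qed

lemma sim_perm: assumes p: "\<pi> permutes {..<n}" and s: "sim n T (\<lambda>i. a (\<pi> i))"
  shows "sim n T a"
proof -
  from s obtain U V where ip2: "inv_pair n U V" and T: "T = U * dg n (\<lambda>i. a (\<pi> i)) * V" by (auto simp: sim_def)
  have ip: "inv_pair n (Pm n (inv_into UNIV \<pi>)) (Pm n \<pi>)"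
    using inv_pair_Pm[OF permutes_inv[OF p]] by (simp add: inv_inv_eq[OF permutes_bij[OF p]])
  have "dg n (\<lambda>i. a (\<pi> i)) = Pm n (inv_into UNIV \<pi>) * dg n a * Pm n \<pi>"
    using Pm_dg_conj[OF permutes_inv[OF p], of a] by (simp add: inv_inv_eq[OF permutes_bij[OF p]])
  then have "sim n (dg n (\<lambda>i. a (\<pi> i))) a" using ip unfolding sim_def by blast
  then have "sim n (U * dg n (\<lambda>i. a (\<pi> i)) * V) a" by (rule sim_conj[OF ip2])
  then show ?thesis using T by simp
qed

lemma dg_cong: "(\<And>i. i < n \<Longrightarrow> f i = g i) \<Longrightarrow> dg n f = dg n g"
  by (rule eq_matI) auto

lemma sim_cong: "sim n T f \<Longrightarrow> (\<And>i. i < n \<Longrightarrow> f i = g i) \<Longrightarrow> sim n T g"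
  unfolding sim_def using dg_cong[of n f g] by metis

lemma sim_S:
  fixes p :: "'a::division_ring poly"
  assumes c: "\<forall>i. coeff p i \<in> ring_center" and lam: "\<forall>i. lam i \<in> ring_center"
    and s1: "sim n T (\<lambda>i. pev p (lam i))" and s2: "sim n T' (\<lambda>i. pev p (lam i))"
  shows "T - T' \<in> poly_commutators p n"
  using s1 s2 S_pair[OF c lam] unfolding sim_def by blast

lemma sim_TRI:
  fixes T :: "'a::division_ring mat"
  assumes "T \<in> carrier_mat n n"
    and "\<forall>i j. i < n \<longrightarrow> j < i \<longrightarrow> T $$ (i,j) = 0"
    and "\<forall>i<n. T $$ (i,i) \<in> ring_center"
    and "\<forall>i<n. \<forall>j<n. i \<noteq> j \<longrightarrow> T $$ (i,i) \<noteq> T $$ (j,j)"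
  shows "sim n T (\<lambda>i. T $$ (i,i))"
  using TRI[OF assms] unfolding sim_def by blast

definition rev_perm :: "nat \<Rightarrow> nat \<Rightarrow> nat" where
  "rev_perm n i = (if i < n then n - 1 - i else i)"

lemma rev_perm_invol: "rev_perm n (rev_perm n i) = i"
  by (auto simp: rev_perm_def)

lemma rev_perm_permutes: "rev_perm n permutes {..<n}"
proof (rule bij_imp_permutes)
  show "bij_betw (rev_perm n) {..<n} {..<n}"
    by (rule bij_betw_byWitness[where f'="rev_perm n"]) (auto simp: rev_perm_def)
  show "\<And>x. x \<notin> {..<n} \<Longrightarrow> rev_perm n x = x" by (auto simp: rev_perm_def)
qed

lemma rev_perm_inv: "inv_into UNIV (rev_perm n) = rev_perm n"
  by (rule inv_unique_comp) (auto simp: fun_eq_iff rev_perm_invol)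

lemma ZD:
  fixes p :: "'a::division_ring poly"
  assumes c: "\<forall>i. coeff p i \<in> ring_center" and lam: "\<forall>i. lam i \<in> ring_center"
    and inj: "inj_on (\<lambda>i. pev p (lam i)) {..<n}"
    and sg: "\<sigma> permutes {..<n}" and N: "N \<in> carrier_mat n n"
    and dN: "\<forall>i<n. N $$ (i,i) = pev p (lam (\<sigma> i)) - pev p (lam i)"
  shows "N \<in> poly_commutators p n"
proof -
  define a where "a i = pev p (lam i)" for i
  have ac: "a i \<in> ring_center" for i using pev_center[OF c] lam by (simp add: a_def)
  have ainj: "\<And>i j. i < n \<Longrightarrow> j < n \<Longrightarrow> a i = a j \<Longrightarrow> i = j" using inj by (auto simp: a_def inj_on_def)
  define T1 where "T1 = mat n n (\<lambda>(i,j). if i < j then N $$ (i,j) else if i = j then a (\<sigma> i) else 0)"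
  define T2 where "T2 = mat n n (\<lambda>(i,j). if j < i then - N $$ (i,j) else if i = j then a i else 0)"
  have NT: "N = T1 - T2"
    by (rule eq_matI) (use N dN in \<open>auto simp: T1_def T2_def a_def\<close>)
  have sgn: "\<And>i. i < n \<Longrightarrow> \<sigma> i < n" using permutes_in_image[OF sg] by auto
  have sginj: "\<And>i j. \<sigma> i = \<sigma> j \<Longrightarrow> i = j" using permutes_inj[OF sg] by (auto simp: inj_def)
  have s1: "sim n T1 a"
  proof -
    have "sim n T1 (\<lambda>i. T1 $$ (i,i))"
      by (rule sim_TRI) (auto simp: T1_def ac dest: sginj ainj[OF sgn sgn])
    then have "sim n T1 (\<lambda>i. a (\<sigma> i))" by (rule sim_cong) (simp add: T1_def)
    then show ?thesis by (rule sim_perm[OF sg])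
  qed
  define \<rho> where "\<rho> = rev_perm n"
  have rp: "\<rho> permutes {..<n}" unfolding \<rho>_def by (rule rev_perm_permutes)
  have ri: "inv_into UNIV \<rho> = \<rho>" unfolding \<rho>_def by (rule rev_perm_inv)
  have cT2: "T2 \<in> carrier_mat n n" by (simp add: T2_def)
  define T2' where "T2' = Pm n \<rho> * T2 * Pm n \<rho>"
  have T2'i: "T2' $$ (i,j) = T2 $$ (\<rho> i, \<rho> j)" if "i < n" "j < n" for i j
    using Pm_conj_index[OF rp cT2 that] ri by (simp add: T2'_def)
  have rn: "\<rho> i < n" if "i < n" for i using that by (auto simp: \<rho>_def rev_perm_def)
  have cT2': "T2' \<in> carrier_mat n n" using cT2 by (simp add: T2'_def mult_carrier_sq)
  have s2': "sim n T2' a"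
  proof -
    have "sim n T2' (\<lambda>i. T2' $$ (i,i))"
    proof (rule sim_TRI[OF cT2'])
      show "\<forall>i j. i < n \<longrightarrow> j < i \<longrightarrow> T2' $$ (i, j) = 0"
        by (auto simp: T2'i rn T2_def \<rho>_def rev_perm_def)
      show "\<forall>i<n. T2' $$ (i, i) \<in> ring_center" by (auto simp: T2'i rn T2_def ac)
      show "\<forall>i<n. \<forall>j<n. i \<noteq> j \<longrightarrow> T2' $$ (i, i) \<noteq> T2' $$ (j, j)"
      proof (intro allI impI)
        fix i j assume i: "i < n" and j: "j < n" and ij: "i \<noteq> j"
        show "T2' $$ (i, i) \<noteq> T2' $$ (j, j)"
        proof
          assume "T2' $$ (i, i) = T2' $$ (j, j)"
          then have "a (\<rho> i) = a (\<rho> j)" using i j by (simp add: T2'i rn T2_def)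
          then have "\<rho> i = \<rho> j" using ainj rn i j by blast
          then have "\<rho> (\<rho> i) = \<rho> (\<rho> j)" by simp
          then show False using ij by (simp add: \<rho>_def rev_perm_invol)
        qed
      qed
    qed
    then have "sim n T2' (\<lambda>i. a (\<rho> i))" by (rule sim_cong) (simp add: T2'i rn T2_def)
    then show ?thesis by (rule sim_perm[OF rp])
  qed
  have ipr: "inv_pair n (Pm n \<rho>) (Pm n \<rho>)" using inv_pair_Pm[OF rp] ri by simp
  have "Pm n \<rho> * T2' * Pm n \<rho> = T2"
  proof -
    have e: "Pm n \<rho> * Pm n \<rho> = (1\<^sub>m n :: 'a mat)" using ipr by (simp add: inv_pair_def)
    have "Pm n \<rho> * T2' * Pm n \<rho> = (Pm n \<rho> * Pm n \<rho>) * T2 * (Pm n \<rho> * Pm n \<rho>)"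
      unfolding T2'_def using cT2 by (simp add: assoc_mult_mat[of _ n n _ n _ n] mult_carrier_sq)
    then show ?thesis using e cT2 by simp
  qed
  moreover have "sim n (Pm n \<rho> * T2' * Pm n \<rho>) a" by (rule sim_conj[OF ipr s2'])
  ultimately have s2: "sim n T2 a" by simp
  have aa: "a = (\<lambda>i. pev p (lam i))" by (simp add: a_def fun_eq_iff)
  show ?thesis unfolding NT by (rule sim_S[OF c lam]) (use s1 s2 aa in auto)
qed

lemma derange_on:
  fixes K :: "nat set" and n :: nat
  assumes K: "K \<subseteq> {..<n}" and cK: "card K \<noteq> 1"
  shows "\<exists>\<sigma>. \<sigma> permutes {..<n} \<and> (\<forall>k. \<sigma> k = k \<longleftrightarrow> k \<notin> K)"
proof (cases "K = {}")
  case True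
  then show ?thesis by (intro exI[of _ id]) (auto simp: permutes_id)
next
  case False
  have fK: "finite K" by (rule finite_subset[OF K]) simp
  define cs where "cs = sorted_list_of_set K"
  have dcs: "distinct cs" and scs: "set cs = K" and lcs: "length cs = card K"
    using fK by (auto simp: cs_def)
  have "card K > 0" using fK False by auto
  then have l2: "length cs \<ge> 2" using lcs cK by simp
  define \<sigma> where "\<sigma> = cycle_of_list cs"
  have "\<sigma> permutes K" using cycle_permutes[of cs] scs by (simp add: \<sigma>_def)
  then have sp: "\<sigma> permutes {..<n}" using K by (rule permutes_subset)
  have out: "\<sigma> k = k" if "k \<notin> K" for k using that scs by (simp add: \<sigma>_def id_outside_supp)
  have inn: "\<sigma> k \<noteq> k" if kK: "k \<in> K" for k
  proof -
    obtain i where i: "i < length cs" and ki: "k = cs ! i" using kK scs in_set_conv_nth[of k cs] by auto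
    have "map \<sigma> cs = rotate 1 cs" using cyclic_rotation[OF dcs, of 1] by (simp add: \<sigma>_def)
    moreover have "\<sigma> k = (map \<sigma> cs) ! i" using i ki by simp
    ultimately have "\<sigma> k = rotate 1 cs ! i" by simp
    also have "\<dots> = cs ! ((1 + i) mod length cs)" using i by (rule nth_rotate)
    finally have sk: "\<sigma> k = cs ! ((1 + i) mod length cs)" .
    have "(1 + i) mod length cs \<noteq> i"
    proof (cases "1 + i < length cs")
      case True then show ?thesis by simp
    next
      case False
      then have "1 + i = length cs" using i by simp
      then show ?thesis using l2 by simp
    qed
    moreover have "(1 + i) mod length cs < length cs" using i by (intro mod_less_divisor) auto
    ultimately show ?thesis using sk ki i dcs by (simp add: nth_eq_iff_index_eq)
  qed
  show ?thesis using sp out inn by blast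
qed

definition sE :: "nat \<Rightarrow> nat \<Rightarrow> nat \<Rightarrow> 'a::ring_1 \<Rightarrow> 'a mat" where
  "sE n i j c = mat n n (\<lambda>(a,b). if a = i \<and> b = j then c else 0)"

lemma sE_carrier[simp]: "sE n i j c \<in> carrier_mat n n" by (simp add: sE_def)
lemma sE_dims[simp]: "dim_row (sE n i j c) = n" "dim_col (sE n i j c) = n" by (simp_all add: sE_def)
lemma sE_index[simp]: "a < n \<Longrightarrow> b < n \<Longrightarrow> sE n i j c $$ (a,b) = (if a = i \<and> b = j then c else 0)"
  by (simp add: sE_def)

lemma sE_mult_left: assumes B: "B \<in> carrier_mat n m" and a: "a < n" and b: "b < m" and j: "j < n"
  shows "(sE n i j c * B) $$ (a,b) = (if a = i then c * B $$ (j,b) else 0)"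
proof -
  have "(sE n i j c * B) $$ (a,b) = (\<Sum>k\<in>{0..<n}. (if a = i \<and> k = j then c else 0) * B $$ (k,b))"
    using B a b by (simp add: scalar_prod_def)
  also have "\<dots> = (\<Sum>k\<in>{0..<n}. if k = j then (if a = i then c * B $$ (k,b) else 0) else 0)"
    by (intro sum.cong) auto
  also have "\<dots> = (if a = i then c * B $$ (j,b) else 0)" using j by simp
  finally show ?thesis .
qed

lemma sE_mult_right: assumes B: "B \<in> carrier_mat m n" and a: "a < m" and b: "b < n" and i: "i < n"
  shows "(B * sE n i j c) $$ (a,b) = (if b = j then B $$ (a,i) * c else 0)"
proof -
  have "(B * sE n i j c) $$ (a,b) = (\<Sum>k\<in>{0..<n}. B $$ (a,k) * (if k = i \<and> b = j then c else 0))"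
    using B a b by (simp add: scalar_prod_def)
  also have "\<dots> = (\<Sum>k\<in>{0..<n}. if k = i then (if b = j then B $$ (a,k) * c else 0) else 0)"
    by (intro sum.cong) auto
  also have "\<dots> = (if b = j then B $$ (a,i) * c else 0)" using i by simp
  finally show ?thesis .
qed

lemma sE_sE: "j < n \<Longrightarrow> sE n i j c * sE n j l d = sE n i l (c * d)"
  by (rule eq_matI) (auto simp: sE_mult_left[where m=n] simp del: index_mult_mat(1))

lemma zero_diag_S:
  fixes p :: "'a::division_ring poly"
  assumes c: "\<forall>i. coeff p i \<in> ring_center" and lam: "\<forall>i. lam i \<in> ring_center"
    and inj: "inj_on (\<lambda>i. pev p (lam i)) {..<n}"
    and N: "N \<in> carrier_mat n n" and dN: "\<forall>i<n. N $$ (i,i) = 0"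
  shows "N \<in> poly_commutators p n"
  by (rule ZD[OF c lam inj permutes_id N]) (use dN in simp)

lemma main1:
  fixes p :: "'a::division_ring poly"
  assumes c: "\<forall>i. coeff p i \<in> ring_center" and lam: "\<forall>i. lam i \<in> ring_center"
    and inj: "inj_on (\<lambda>i. pev p (lam i)) {..<n}" and n2: "n \<ge> 2"
    and M: "M \<in> carrier_mat n n" and cK: "card {k. k < n \<and> M $$ (k,k) \<noteq> 0} \<noteq> 1"
  shows "\<exists>X Y Z. X \<in> poly_commutators p n \<and> Y \<in> poly_commutators p n
           \<and> Z \<in> poly_commutators p n \<and> M = X * Y * Z"
proof -
  define K where "K = {k. k < n \<and> M $$ (k,k) \<noteq> 0}"
  have Kn: "K \<subseteq> {..<n}" by (auto simp: K_def)
  obtain \<sigma> where sg: "\<sigma> permutes {..<n}" and sK: "\<And>k. \<sigma> k = k \<longleftrightarrow> k \<notin> K"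
    using derange_on[OF Kn] cK unfolding K_def by blast
  have "card {..<n} \<noteq> 1" using n2 by simp
  then obtain c0 where c0: "c0 permutes {..<n}" and c0K: "\<And>k. c0 k = k \<longleftrightarrow> k \<notin> {..<n}"
    using derange_on[of "{..<n}" n] by blast
  define a where "a i = pev p (lam i)" for i
  define d where "d k = a (\<sigma> k) - a k" for k
  have dnz: "d k \<noteq> 0" if "k \<in> K" for k
  proof
    assume "d k = 0"
    then have "a (\<sigma> k) = a k" by (simp add: d_def)
    moreover have "k < n" "\<sigma> k < n" using that Kn permutes_in_image[OF sg, of k] by auto
    ultimately have "\<sigma> k = k" using inj by (auto simp: a_def inj_on_def)
    then show False using sK that by simp
  qed
  define g where "g k = (if k \<in> K then d k * inverse (M $$ (k,k)) else 1)" for k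
  define gi where "gi k = (if k \<in> K then M $$ (k,k) * inverse (d k) else 1)" for k
  have gg: "gi k * g k = 1" for k
  proof (cases "k \<in> K")
    case True
    then have "M $$ (k,k) \<noteq> 0" by (simp add: K_def)
    have "gi k * g k = M $$ (k,k) * (inverse (d k) * d k) * inverse (M $$ (k,k))"
      using True by (simp add: g_def gi_def mult.assoc)
    then show ?thesis using True dnz[OF True] \<open>M $$ (k,k) \<noteq> 0\<close> by simp
  qed (simp add: g_def gi_def)
  define X1 where "X1 = dg n gi * Pm n c0"
  define X2 where "X2 = (Pm n (inv_into UNIV c0) :: 'a mat)"
  define X3 where "X3 = dg n g * M"
  have cX1: "X1 \<in> carrier_mat n n" by (simp add: X1_def mult_carrier_sq)
  have cX2: "X2 \<in> carrier_mat n n" by (simp add: X2_def)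
  have cX3: "X3 \<in> carrier_mat n n" using M by (simp add: X3_def mult_carrier_sq)
  have "X1 * X2 * X3 = dg n gi * (Pm n c0 * Pm n (inv_into UNIV c0)) * (dg n g * M)"
    unfolding X1_def X2_def X3_def using M by (simp add: assoc_mult_mat[of _ n n _ n _ n] mult_carrier_sq)
  also have "\<dots> = (dg n gi * dg n g) * M"
    using M by (simp add: Pm_inv_right[OF c0] assoc_mult_mat[of _ n n _ n _ n] mult_carrier_sq)
  also have "\<dots> = M" using M by (simp add: dg_mult_dg gg dg_one)
  finally have prod: "M = X1 * X2 * X3" by simp
  have S1: "X1 \<in> poly_commutators p n"
  proof (rule zero_diag_S[OF c lam inj cX1], intro allI impI)
    fix i assume i: "i < n"
    have "X1 $$ (i,i) = gi i * Pm n c0 $$ (i,i)" unfolding X1_def by (rule dg_mult_index) (use i in auto)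
    then show "X1 $$ (i,i) = 0" using c0K[of i] i by simp
  qed
  have S2: "X2 \<in> poly_commutators p n"
  proof (rule zero_diag_S[OF c lam inj cX2], intro allI impI)
    fix i assume i: "i < n"
    have "i \<noteq> inv_into UNIV c0 i"
    proof
      assume "i = inv_into UNIV c0 i"
      then have "c0 i = i" using permutes_inv_eq[OF c0] by metis
      then show False using c0K[of i] i by simp
    qed
    then show "X2 $$ (i,i) = 0" using i by (simp add: X2_def)
  qed
  have S3: "X3 \<in> poly_commutators p n"
  proof (rule ZD[OF c lam inj sg cX3], intro allI impI)
    fix k assume k: "k < n"
    have "X3 $$ (k,k) = g k * M $$ (k,k)" unfolding X3_def by (rule dg_mult_index[OF M k k])
    also have "\<dots> = pev p (lam (\<sigma> k)) - pev p (lam k)"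
    proof (cases "k \<in> K")
      case True
      then have "M $$ (k,k) \<noteq> 0" by (simp add: K_def)
      then show ?thesis using True by (simp add: g_def d_def a_def mult.assoc)
    next
      case False
      then have "M $$ (k,k) = 0" "\<sigma> k = k" using k sK by (auto simp: K_def)
      then show ?thesis by simp
    qed
    finally show "X3 $$ (k,k) = pev p (lam (\<sigma> k)) - pev p (lam k)" .
  qed
  show ?thesis using S1 S2 S3 prod by blast
qed

lemma main2:
  fixes p :: "'a::division_ring poly"
  assumes c: "\<forall>i. coeff p i \<in> ring_center" and lam: "\<forall>i. lam i \<in> ring_center"
    and inj: "inj_on (\<lambda>i. pev p (lam i)) {..<n}" and n3: "n \<ge> 3"
    and M: "M \<in> carrier_mat n n" and k: "k < n"
    and Mk: "\<forall>a<n. \<forall>b<n. M $$ (a,b) = (if a = k \<and> b = k then m else 0)"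
  shows "\<exists>X Y Z. X \<in> poly_commutators p n \<and> Y \<in> poly_commutators p n
           \<and> Z \<in> poly_commutators p n \<and> M = X * Y * Z"
proof -
  obtain j l where jl: "j < n" "l < n" "j \<noteq> k" "l \<noteq> k" "j \<noteq> l"
  proof (cases "k = 0")
    case True then show ?thesis using that[of 1 2] n3 by auto
  next
    case False
    show ?thesis
    proof (cases "k = 1")
      case True then show ?thesis using that[of 0 2] n3 by auto
    next
      case False
      then show ?thesis using that[of 0 1] n3 \<open>k \<noteq> 0\<close> by auto
    qed
  qed
  have "sE n k j m * sE n j l 1 * sE n l k 1 = sE n k k (m :: 'a)"
    using jl by (simp add: sE_sE)
  moreover have "sE n k k m = M" using M Mk by (intro eq_matI) auto
  moreover have "sE n a b (x::'a) \<in> poly_commutators p n" if "a \<noteq> b" for a b x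
    by (rule zero_diag_S[OF c lam inj]) (use that in auto)
  ultimately show ?thesis using jl by metis
qed

lemma main3:
  fixes p :: "'a::division_ring poly"
  assumes c: "\<forall>i. coeff p i \<in> ring_center" and lam: "\<forall>i. lam i \<in> ring_center"
    and inj: "inj_on (\<lambda>i. pev p (lam i)) {..<n}" and n2: "n \<ge> 2"
    and inf: "infinite (ring_center :: 'a set)"
    and M: "M \<in> carrier_mat n n" and l: "l < n" and j: "j < n" and lj: "l \<noteq> j" and Mlj: "M $$ (l,j) \<noteq> 0"
  shows "\<exists>X Y Z. X \<in> poly_commutators p n \<and> Y \<in> poly_commutators p n
           \<and> Z \<in> poly_commutators p n \<and> M = X * Y * Z"
proof -
  define q where "q = M $$ (l,j)"
  define B where "B = {- M $$ (j,j) * inverse q, M $$ (l,l) * inverse q}"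
  have "infinite (ring_center - B)" using inf by (simp add: B_def)
  then obtain t where tc: "t \<in> ring_center" and tB: "t \<notin> B"
    by (metis Diff_iff finite.emptyI infinite_imp_nonempty ex_in_conv)
  have qnz: "q \<noteq> 0" using Mlj by (simp add: q_def)
  have t1: "M $$ (j,j) + t * q \<noteq> 0"
  proof
    assume "M $$ (j,j) + t * q = 0"
    then have "t * q = - M $$ (j,j)" by (simp add: eq_neg_iff_add_eq_0 add.commute)
    then have "t = - M $$ (j,j) * inverse q" using qnz by (metis mult.assoc right_inverse mult.right_neutral)
    then show False using tB by (simp add: B_def)
  qed
  have t2: "M $$ (l,l) - q * t \<noteq> 0"
  proof
    assume "M $$ (l,l) - q * t = 0"
    then have "t * q = M $$ (l,l)" using center_comm[OF tc, of q] by simp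
    then have "t = M $$ (l,l) * inverse q" using qnz by (metis mult.assoc right_inverse mult.right_neutral)
    then show False using tB by (simp add: B_def)
  qed
  define W where "W = 1\<^sub>m n + sE n j l t"
  define W' where "W' = 1\<^sub>m n + sE n j l (- t)"
  have cW: "W \<in> carrier_mat n n" and cW': "W' \<in> carrier_mat n n" by (simp_all add: W_def W'_def)
  have Wl: "(1\<^sub>m n + sE n j l s) * B = B + sE n j l s * B" if "B \<in> carrier_mat n n" for s B
    using that by (subst add_mult_distrib_mat[of _ n n]) auto
  have Wr: "B * (1\<^sub>m n + sE n j l s) = B + B * sE n j l s" if "B \<in> carrier_mat n n" for s B
    using that by (subst mult_add_distrib_mat[of _ n n _ n]) auto
  have WL: "((1\<^sub>m n + sE n j l s) * B) $$ (a,b) = B $$ (a,b) + (if a = j then s * B $$ (l,b) else 0)"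
    if "B \<in> carrier_mat n n" "a < n" "b < n" for s B a b
    using that Wl[OF that(1), of s] by (simp add: sE_mult_left[OF that(1) that(2) that(3) l] del: index_mult_mat(1))
  have WR: "(B * (1\<^sub>m n + sE n j l s)) $$ (a,b) = B $$ (a,b) + (if b = l then B $$ (a,j) * s else 0)"
    if "B \<in> carrier_mat n n" "a < n" "b < n" for s B a b
    using that Wr[OF that(1), of s] by (simp add: sE_mult_right[OF that(1) that(2) that(3) j] del: index_mult_mat(1))
  have WW': "W * W' = 1\<^sub>m n"
    by (rule eq_matI) (use cW' l j lj in \<open>auto simp: W_def WL W'_def simp del: index_mult_mat(1)\<close>)
  have W'W: "W' * W = 1\<^sub>m n"
    by (rule eq_matI) (use cW l j lj in \<open>auto simp: W'_def WL W_def simp del: index_mult_mat(1)\<close>)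
  have ip: "inv_pair n W' W" using cW cW' WW' W'W by (simp add: inv_pair_def)
  define M' where "M' = W * M * W'"
  have cM': "M' \<in> carrier_mat n n" using cW cW' M by (simp add: M'_def mult_carrier_sq)
  have cWM: "W * M \<in> carrier_mat n n" using cW M by (simp add: mult_carrier_sq)
  have M'jj: "M' $$ (j,j) = M $$ (j,j) + t * q"
    unfolding M'_def W'_def using j l lj cWM
    by (simp add: WR[OF cWM j j] del: index_mult_mat(1)) (simp add: W_def WL[OF M j j] q_def del: index_mult_mat(1))
  have M'll: "M' $$ (l,l) = M $$ (l,l) - q * t"
    unfolding M'_def W'_def using j l lj cWM
    by (simp add: WR[OF cWM l l] del: index_mult_mat(1)) (simp add: W_def WL[OF M l l] WL[OF M l j] q_def del: index_mult_mat(1))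
  have "{j, l} \<subseteq> {k. k < n \<and> M' $$ (k,k) \<noteq> 0}" using M'jj M'll t1 t2 j l by auto
  then have "card {j, l} \<le> card {k. k < n \<and> M' $$ (k,k) \<noteq> 0}" by (rule card_mono[rotated]) simp
  then have "card {k. k < n \<and> M' $$ (k,k) \<noteq> 0} \<noteq> 1" using lj by auto
  then obtain X Y Z where S: "X \<in> poly_commutators p n" "Y \<in> poly_commutators p n" "Z \<in> poly_commutators p n"
    and M'XYZ: "M' = X * Y * Z"
    using main1[OF c lam inj n2 cM'] by blast
  have cXYZ: "X \<in> carrier_mat n n" "Y \<in> carrier_mat n n" "Z \<in> carrier_mat n n"
    using S unfolding poly_commutators_def by (auto intro!: minus_carrier_mat poly_mat_carrier)
  have c1: "W * (W' * R) = R" if "R \<in> carrier_mat n n" for R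
    using that cW cW' WW' by (simp add: assoc_mult_mat[symmetric, of _ n n _ n _ n])
  have c2: "W' * (W * R) = R" if "R \<in> carrier_mat n n" for R
    using that cW cW' W'W by (simp add: assoc_mult_mat[symmetric, of _ n n _ n _ n])
  have "(W' * X * W) * (W' * Y * W) * (W' * Z * W) = W' * (X * (Y * (Z * W)))"
    using cXYZ cW cW' by (simp add: assoc_mult_mat[of _ n n _ n _ n] mult_carrier_sq c1)
  also have "\<dots> = W' * M' * W"
    unfolding M'XYZ using cXYZ cW cW' by (simp add: assoc_mult_mat[of _ n n _ n _ n] mult_carrier_sq)
  also have "\<dots> = M"
    unfolding M'_def using M cW cW' W'W by (simp add: assoc_mult_mat[of _ n n _ n _ n] mult_carrier_sq c2)
  finally have "M = (W' * X * W) * (W' * Y * W) * (W' * Z * W)" by simp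
  moreover have "W' * X * W \<in> poly_commutators p n" "W' * Y * W \<in> poly_commutators p n"
    "W' * Z * W \<in> poly_commutators p n"
    using S_conj[OF c _ ip] S by auto
  ultimately show ?thesis by blast
qed

theorem theorem4p6:
  fixes p :: "'a::division_ring poly" and n :: nat
  assumes "infinite (ring_center :: 'a set)"
    and "n \<ge> 3"
    and "\<forall>i. coeff p i \<in> ring_center"
    and "degree p \<ge> 1"
  shows "\<forall>M \<in> carrier_mat n n. \<exists>X Y Z. X \<in> poly_commutators p n \<and> Y \<in> poly_commutators p n
           \<and> Z \<in> poly_commutators p n \<and> M = X * Y * Z"
proof (intro ballI)
  fix M :: "'a mat" assume M: "M \<in> carrier_mat n n"
  obtain lam where lam: "\<forall>i. lam i \<in> ring_center" and inj: "inj_on (\<lambda>i. pev p (lam i)) {..<n}"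
    using distinct_values[OF assms(1) assms(3) assms(4), of n] by blast
  have n2: "n \<ge> 2" using assms(2) by simp
  show "\<exists>X Y Z. X \<in> poly_commutators p n \<and> Y \<in> poly_commutators p n
           \<and> Z \<in> poly_commutators p n \<and> M = X * Y * Z"
  proof (cases "card {k. k < n \<and> M $$ (k,k) \<noteq> 0} = 1")
    case False
    then show ?thesis by (rule main1[OF assms(3) lam inj n2 M])
  next
    case K1: True
    show ?thesis
    proof (cases "\<exists>l j. l < n \<and> j < n \<and> l \<noteq> j \<and> M $$ (l,j) \<noteq> 0")
      case True
      then obtain l j where "l < n" "j < n" "l \<noteq> j" "M $$ (l,j) \<noteq> 0" by blast
      then show ?thesis using main3[OF assms(3) lam inj n2 assms(1) M] by blast
    next
      case False
      from K1 obtain k where Kk: "{k. k < n \<and> M $$ (k,k) \<noteq> 0} = {k}" by (rule card_1_singletonE)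
      then have k: "k < n" and Mkk: "M $$ (k,k) \<noteq> 0" by auto
      have Mk: "\<forall>a<n. \<forall>b<n. M $$ (a,b) = (if a = k \<and> b = k then M $$ (k,k) else 0)"
      proof (intro allI impI)
        fix a b assume a: "a < n" and b: "b < n"
        show "M $$ (a,b) = (if a = k \<and> b = k then M $$ (k,k) else 0)"
        proof (cases "a = b")
          case True
          then show ?thesis using Kk a by auto
        next
          case False
          then show ?thesis using \<open>\<not> (\<exists>l j. l < n \<and> j < n \<and> l \<noteq> j \<and> M $$ (l,j) \<noteq> 0)\<close> a b by auto
        qed
      qed
      show ?thesis by (rule main2[OF assms(3) lam inj assms(2) M k Mk])
    qed
  qed
qed

end
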